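(* For integers $b\ge a\ge 0$ and $k\ge 0$, $$\sum_{\substack{\pi\in\mathcal I_{a+b}(321)\\ \mathrm{fp}(\pi)\ge b-a\\ \mathrm{des}(\pi)=k}} q^{\mathrm{maj}(\pi)}=q^{k^2}\binom{a}{k}_q\binom{b}{k}_q.$$ Consequently, for integers $0\le\ell\le n$ with $\ell\equiv n\pmod 2$ and $k\ge0$, $$\sum_{\substack{\pi\in\mathcal I_{n}(321)\\ \mathrm{fp}(\pi)=\ell \\ \mathrm{des}(\pi)=k}} q^{\mathrm{maj}(\pi)}=q^{k^2}\left[\binom{\frac{n-\ell}{2}}{k}_q\binom{\frac{n+\ell}{2}}{k}_q-\binom{\frac{n-\ell}{2}-1}{k}_q\binom{\frac{n+\ell}{2}+1}{k}_q\right],$$ with the convention that $\binom{m}{k}_q=0$ when $m<0$.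
   Context: $\mathcal I_m(321)$ is the set of involutions in $\mathcal S_m$ avoiding $321$; $\mathrm{fp}(\pi)$ is its number of fixed points; $\mathrm{des}(\pi)$ is the number of positions $i$ with $\pi(i)>\pi(i+1)$ and $\mathrm{maj}(\pi)$ is the sum of these positions. $\binom{m}{k}_q$ is the Gaussian binomial coefficient (equal to $0$ if $k>m$). *)

theory Defs
  imports "HOL-Combinatorics.Permutations" "HOL-Computational_Algebra.Polynomial"
begin

text \<open>Permutations of [m] = {1..m}, represented as functions nat => nat permuting {1..m}.\<close>

definition involution :: "(nat \<Rightarrow> nat) \<Rightarrow> bool" where
  "involution p \<longleftrightarrow> p \<circ> p = id"

definition avoids321 :: "nat \<Rightarrow> (nat \<Rightarrow> nat) \<Rightarrow> bool" where
  "avoids321 m p \<longleftrightarrow>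
     \<not> (\<exists>i j k. 1 \<le> i \<and> i < j \<and> j < k \<and> k \<le> m \<and> p i > p j \<and> p j > p k)"

definition inv321 :: "nat \<Rightarrow> (nat \<Rightarrow> nat) set" where
  "inv321 m = {p. p permutes {1..m} \<and> involution p \<and> avoids321 m p}"

definition fp :: "nat \<Rightarrow> (nat \<Rightarrow> nat) \<Rightarrow> nat" where
  "fp m p = card {i \<in> {1..m}. p i = i}"

definition descents :: "nat \<Rightarrow> (nat \<Rightarrow> nat) \<Rightarrow> nat set" where
  "descents m p = {i. 1 \<le> i \<and> i < m \<and> p i > p (Suc i)}"

definition des :: "nat \<Rightarrow> (nat \<Rightarrow> nat) \<Rightarrow> nat" where
  "des m p = card (descents m p)"

definition maj :: "nat \<Rightarrow> (nat \<Rightarrow> nat) \<Rightarrow> nat" where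
  "maj m p = \<Sum> (descents m p)"

fun qbin :: "nat \<Rightarrow> nat \<Rightarrow> int poly" where
  "qbin m 0 = 1"
| "qbin 0 (Suc k) = 0"
| "qbin (Suc m) (Suc k) = qbin m k + monom 1 (Suc k) * qbin m (Suc k)"

definition qbinz :: "int \<Rightarrow> nat \<Rightarrow> int poly" where
  "qbinz m k = (if m < 0 then 0 else qbin (nat m) k)"

end

theory Submission
  imports Defs
begin


lemma qbin_eq_0: "m < k \<Longrightarrow> qbin m k = 0"
proof (induction m arbitrary: k)
  case 0 then show ?case by (cases k) auto
next
  case (Suc m) then show ?case by (cases k) auto
qed

lemma monom11: "monom (1::int) a * monom 1 b = monom 1 (a + b)"
  by (simp add: mult_monom)

lemma qbin_pascal2: "qbin (Suc m) (Suc k) = monom 1 (m - k) * qbin m k + qbin m (Suc k)"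
proof (induction m arbitrary: k)
  case 0
  then show ?case by (cases k) auto
next
  case (Suc m)
  show ?case
  proof (cases k)
    case 0
    have "qbin (Suc (Suc m)) (Suc 0) = 1 + monom 1 1 * qbin (Suc m) 1" by simp
    also have "\<dots> = 1 + monom 1 1 * (monom 1 m + qbin m 1)" using Suc[of 0] by simp
    also have "\<dots> = monom 1 (Suc m) + (1 + monom 1 1 * qbin m 1)"
      by (simp add: algebra_simps monom11)
    also have "\<dots> = monom 1 (Suc m - 0) * qbin (Suc m) 0 + qbin (Suc m) (Suc 0)" by simp
    finally show ?thesis using 0 by simp
  next
    case (Suc j)
    have e: "monom 1 (Suc k) * (monom 1 (m - k) * qbin m k) = monom 1 (Suc m - k) * (monom 1 k * qbin m k)"
    proof (cases "m < k")
      case True then show ?thesis by (simp add: qbin_eq_0)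
    next
      case False
      then have "Suc k + (m - k) = (Suc m - k) + k" by simp
      then show ?thesis by (metis monom11 mult.assoc)
    qed
    have "qbin (Suc (Suc m)) (Suc k) = qbin (Suc m) k + monom 1 (Suc k) * qbin (Suc m) (Suc k)" by simp
    also have "\<dots> = (monom 1 (m - j) * qbin m j + qbin m k) + monom 1 (Suc k) * (monom 1 (m - k) * qbin m k + qbin m (Suc k))"
      using Suc.IH[of j] Suc.IH[of k] \<open>k = Suc j\<close> by simp
    also have "\<dots> = monom 1 (Suc m - k) * (qbin m j + monom 1 k * qbin m k) + (qbin m k + monom 1 (Suc k) * qbin m (Suc k))"
      using e \<open>k = Suc j\<close> by (simp add: algebra_simps)
    also have "\<dots> = monom 1 (Suc m - k) * qbin (Suc m) k + qbin (Suc m) (Suc k)"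
      using \<open>k = Suc j\<close> by simp
    finally show ?thesis .
  qed
qed

definition hat :: "nat \<Rightarrow> nat \<Rightarrow> nat \<Rightarrow> int poly" where
  "hat a b k = monom 1 (k^2) * qbin a k * qbin b k"

lemma hat_0: "hat a b 0 = 1" by (simp add: hat_def)
lemma hat_comm: "hat a b k = hat b a k" by (simp add: hat_def algebra_simps)

lemma hat_key:
  "hat (Suc a) b k + hat a (Suc b) k - hat a b k
   + (if k = 0 then 0 else monom 1 (Suc (a + b)) * hat a b (k - 1)) = hat (Suc a) (Suc b) k"
proof (cases k)
  case 0 then show ?thesis by (simp add: hat_0)
next
  case (Suc j)
  define M where "M = monom (1::int) (k^2)"
  define X where "X = monom (1::int) (a - j)"
  define Y where "Y = monom (1::int) (b - j)"
  have key: "M * X * Y * qbin a j * qbin b j = monom 1 (Suc (a + b)) * monom 1 (j^2) * qbin a j * qbin b j"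
  proof (cases "a < j \<or> b < j")
    case True then show ?thesis by (auto simp: qbin_eq_0)
  next
    case False
    then have "k^2 + (a - j) + (b - j) = Suc (a + b) + j^2" using Suc by (simp add: power2_eq_square)
    then have "M * X * Y = monom 1 (Suc (a + b)) * monom 1 (j^2)"
      unfolding M_def X_def Y_def by (simp add: monom11)
    then show ?thesis by simp
  qed
  have h1: "hat (Suc a) (Suc b) k = M * (X * qbin a j + qbin a k) * (Y * qbin b j + qbin b k)"
    unfolding hat_def M_def X_def Y_def using Suc qbin_pascal2 by simp
  have h2: "hat (Suc a) b k = M * (X * qbin a j + qbin a k) * qbin b k"
    unfolding hat_def M_def X_def Y_def using Suc qbin_pascal2 by simp
  have h3: "hat a (Suc b) k = M * qbin a k * (Y * qbin b j + qbin b k)"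
    unfolding hat_def M_def X_def Y_def using Suc qbin_pascal2 by simp
  have h4: "hat a b k = M * qbin a k * qbin b k" unfolding hat_def M_def by simp
  have h5: "monom 1 (Suc (a + b)) * hat a b (k - 1) = M * X * Y * qbin a j * qbin b j"
  proof -
    have "monom 1 (Suc (a + b)) * hat a b (k - 1) = monom 1 (Suc (a + b)) * monom 1 (j^2) * qbin a j * qbin b j"
      unfolding hat_def using Suc by (simp add: algebra_simps)
    then show ?thesis using key by argo
  qed
  show ?thesis using Suc h1 h2 h3 h4 h5 by (simp add: algebra_simps)
qed



definition bal :: "nat set \<Rightarrow> nat set \<Rightarrow> bool" where
  "bal S C \<longleftrightarrow> C \<subseteq> S \<and> (\<forall>t. card (C \<inter> {..t}) \<le> card ((S - C) \<inter> {..t}))"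

definition Bal :: "nat \<Rightarrow> nat set set" where "Bal n = {C. bal {1..n} C}"

definition dset :: "nat set \<Rightarrow> nat set" where
  "dset C = {i. 1 \<le> i \<and> i \<notin> C \<and> Suc i \<in> C}"

definition W :: "nat set \<Rightarrow> int poly" where "W C = monom 1 (\<Sum> (dset C))"

definition Q :: "nat \<Rightarrow> nat \<Rightarrow> nat \<Rightarrow> nat set set" where
  "Q n a k = {C \<in> Bal n. card C \<le> a \<and> card (dset C) = k}"

definition Pf where "Pf n a k = sum W (Q n a k)"
definition PU where "PU n a k = sum W {C \<in> Q n a k. n \<notin> C}"
definition PD where "PD n a k = sum W {C \<in> Q n a k. n \<in> C}"

lemma Bal_sub: "C \<in> Bal n \<Longrightarrow> C \<subseteq> {1..n}"
  by (simp add: Bal_def bal_def)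

lemma finite_Bal: "finite (Bal n)"
proof -
  have "Bal n \<subseteq> Pow {1..n}" using Bal_sub by blast
  then show ?thesis by (rule finite_subset) simp
qed

lemma card_ins_Suc: "C \<subseteq> {1..n} \<Longrightarrow> card (insert (Suc n) C) = Suc (card C)"
proof -
  assume C: "C \<subseteq> {1..n}"
  then have "finite C" by (rule finite_subset) simp
  moreover have "Suc n \<notin> C" using C by auto
  ultimately show ?thesis by simp
qed

lemma finite_Q: "finite (Q n a k)"
  using finite_Bal by (rule finite_subset[rotated]) (auto simp: Q_def)

lemma Bal_card: assumes "C \<in> Bal n" shows "2 * card C \<le> n"
proof -
  have C: "C \<subseteq> {1..n}" using assms by (rule Bal_sub)
  have "card (C \<inter> {..n}) \<le> card (({1..n} - C) \<inter> {..n})"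
    using assms by (simp add: Bal_def bal_def)
  moreover have "C \<inter> {..n} = C" using C by auto
  moreover have "({1..n} - C) \<inter> {..n} = {1..n} - C" by auto
  moreover have "card ({1..n} - C) = n - card C"
    using C by (simp add: card_Diff_subset finite_subset)
  moreover have "card C \<le> n" using C by (metis card_atLeastAtMost card_mono finite_atLeastAtMost diff_Suc_1)
  ultimately show ?thesis by simp
qed

lemma Pf_split: "Pf n a k = PU n a k + PD n a k"
proof -
  have "Q n a k = {C \<in> Q n a k. n \<notin> C} \<union> {C \<in> Q n a k. n \<in> C}" by auto
  then have "Pf n a k = sum W ({C \<in> Q n a k. n \<notin> C} \<union> {C \<in> Q n a k. n \<in> C})"
    unfolding Pf_def by simp
  also have "\<dots> = PU n a k + PD n a k"
    unfolding PU_def PD_def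
    by (rule sum.union_disjoint) (auto intro: finite_subset[OF _ finite_Q])
  finally show ?thesis .
qed

lemma Bal_Suc_notin: "{C \<in> Bal (Suc n). Suc n \<notin> C} = Bal n"
proof (intro set_eqI iffI)
  fix C assume A: "C \<in> {C \<in> Bal (Suc n). Suc n \<notin> C}"
  then have C: "C \<subseteq> {1..n}" using Bal_sub[of C "Suc n"] by (auto simp: subset_iff le_Suc_eq)
  have b: "\<And>t. card (C \<inter> {..t}) \<le> card (({1..Suc n} - C) \<inter> {..t})"
    using A by (simp add: Bal_def bal_def)
  have "card (C \<inter> {..t}) \<le> card (({1..n} - C) \<inter> {..t})" for t
  proof -
    have "C \<inter> {..t} = C \<inter> {..min t n}" using C by auto
    moreover have "({1..n} - C) \<inter> {..t} = ({1..Suc n} - C) \<inter> {..min t n}" by auto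
    ultimately show ?thesis using b[of "min t n"] by simp
  qed
  then show "C \<in> Bal n" using C by (simp add: Bal_def bal_def)
next
  fix C assume A: "C \<in> Bal n"
  then have C: "C \<subseteq> {1..n}" by (rule Bal_sub)
  have b: "\<And>t. card (C \<inter> {..t}) \<le> card (({1..n} - C) \<inter> {..t})"
    using A by (simp add: Bal_def bal_def)
  have "card (C \<inter> {..t}) \<le> card (({1..Suc n} - C) \<inter> {..t})" for t
  proof -
    have "C \<inter> {..t} = C \<inter> {..min t n}" using C by auto
    moreover have "({1..n} - C) \<inter> {..min t n} \<subseteq> ({1..Suc n} - C) \<inter> {..t}" by auto
    then have "card (({1..n} - C) \<inter> {..min t n}) \<le> card (({1..Suc n} - C) \<inter> {..t})"
      by (rule card_mono[rotated]) auto
    ultimately show ?thesis using b[of "min t n"] by simp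
  qed
  moreover have "Suc n \<notin> C" using C by auto
  ultimately show "C \<in> {C \<in> Bal (Suc n). Suc n \<notin> C}" using C by (auto simp: Bal_def bal_def)
qed

lemma Bal_Suc_in: "{C \<in> Bal (Suc n). Suc n \<in> C} = insert (Suc n) ` {C \<in> Bal n. 2 * card C < n}"
proof (intro set_eqI iffI)
  fix C assume A: "C \<in> {C \<in> Bal (Suc n). Suc n \<in> C}"
  define C' where "C' = C - {Suc n}"
  have C: "C \<subseteq> {1..Suc n}" using A Bal_sub by blast
  then have C': "C' \<subseteq> {1..n}" unfolding C'_def by auto
  have fC': "finite C'" using C' finite_subset by blast
  have b: "\<And>t. card (C \<inter> {..t}) \<le> card (({1..Suc n} - C) \<inter> {..t})"
    using A by (simp add: Bal_def bal_def)
  have "card (C' \<inter> {..t}) \<le> card (({1..n} - C') \<inter> {..t})" for t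
  proof -
    have "C' \<inter> {..t} \<subseteq> C \<inter> {..min t (Suc n)}" unfolding C'_def using C by auto
    then have "card (C' \<inter> {..t}) \<le> card (C \<inter> {..min t (Suc n)})"
      by (rule card_mono[rotated]) auto
    moreover have "({1..Suc n} - C) \<inter> {..min t (Suc n)} = ({1..n} - C') \<inter> {..t}"
      using A unfolding C'_def by (auto simp: le_Suc_eq)
    ultimately show ?thesis using b[of "min t (Suc n)"] by simp
  qed
  then have "C' \<in> Bal n" using C' by (simp add: Bal_def bal_def)
  moreover have "2 * card C' < n"
  proof -
    have "C \<inter> {..Suc n} = C" using C by auto
    moreover have "({1..Suc n} - C) \<inter> {..Suc n} = {1..n} - C'" using A unfolding C'_def by (auto simp: le_Suc_eq)
    ultimately have "card C \<le> card ({1..n} - C')" using b[of "Suc n"] by simp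
    moreover have "card C = Suc (card C')"
    proof -
      have "C = insert (Suc n) C'" using A unfolding C'_def by auto
      then show ?thesis using card_ins_Suc[OF C'] by simp
    qed
    moreover have "card ({1..n} - C') = n - card C'" using C' by (simp add: card_Diff_subset fC')
    ultimately show ?thesis by simp
  qed
  moreover have "C = insert (Suc n) C'" using A unfolding C'_def by auto
  ultimately show "C \<in> insert (Suc n) ` {C \<in> Bal n. 2 * card C < n}" by auto
next
  fix C assume "C \<in> insert (Suc n) ` {C \<in> Bal n. 2 * card C < n}"
  then obtain C' where A: "C' \<in> Bal n" "2 * card C' < n" and CC: "C = insert (Suc n) C'" by auto
  have C': "C' \<subseteq> {1..n}" using A Bal_sub by blast
  have fC': "finite C'" using C' finite_subset by blast
  have b: "\<And>t. card (C' \<inter> {..t}) \<le> card (({1..n} - C') \<inter> {..t})"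
    using A by (simp add: Bal_def bal_def)
  have "card (C \<inter> {..t}) \<le> card (({1..Suc n} - C) \<inter> {..t})" for t
  proof (cases "t \<le> n")
    case True
    then have "C \<inter> {..t} = C' \<inter> {..t}" "({1..Suc n} - C) \<inter> {..t} = ({1..n} - C') \<inter> {..t}"
      using CC by auto
    then show ?thesis using b[of t] by simp
  next
    case False
    then have "C \<inter> {..t} = C" "({1..Suc n} - C) \<inter> {..t} = {1..n} - C'" using CC C' by auto
    moreover have "card C = Suc (card C')" using CC card_ins_Suc[OF C'] by simp
    moreover have "card ({1..n} - C') = n - card C'" using C' by (simp add: card_Diff_subset fC')
    ultimately show ?thesis using A(2) by simp
  qed
  then show "C \<in> {C \<in> Bal (Suc n). Suc n \<in> C}" using CC C' by (auto simp: Bal_def bal_def)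
qed

lemma PU_Suc: "PU (Suc n) a k = Pf n a k"
proof -
  have "{C \<in> Q (Suc n) a k. Suc n \<notin> C} = Q n a k"
    using Bal_Suc_notin[of n] unfolding Q_def by blast
  then show ?thesis by (simp add: PU_def Pf_def)
qed

lemma PD_0: "PD n 0 k = 0"
proof -
  have e: "{C \<in> Q n 0 k. n \<in> C} = {}"
    using Bal_sub by (fastforce simp: Q_def dest: finite_subset[OF _ finite_atLeastAtMost])
  show ?thesis unfolding PD_def e by simp
qed

lemma dset_sub: "C \<subseteq> {1..n} \<Longrightarrow> dset C \<subseteq> {1..n}"
  by (auto simp: dset_def)

lemma dset_insert:
  assumes "C \<subseteq> {1..n}" "n \<ge> 1" "n \<notin> C"
  shows "dset (insert (Suc n) C) = insert n (dset C)" "n \<notin> dset C"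
  using assms by (auto simp: dset_def)

lemma dset_insert2:
  assumes "C \<subseteq> {1..n}" "n \<in> C"
  shows "dset (insert (Suc n) C) = dset C"
  using assms by (auto simp: dset_def)

lemma PD_Suc:
  assumes "2 * a < n"
  shows "PD (Suc n) (Suc a) k = PD n a k + (if k = 0 then 0 else monom 1 n * PU n a (k - 1))"
proof -
  have n1: "n \<ge> 1" using assms by simp
  define T where "T = {C \<in> Bal n. card C \<le> a \<and> card (dset (insert (Suc n) C)) = k}"
  have fT: "finite T" unfolding T_def using finite_Bal by simp
  have "{C \<in> Q (Suc n) (Suc a) k. Suc n \<in> C} = insert (Suc n) ` T"
  proof -
    have "{C \<in> Q (Suc n) (Suc a) k. Suc n \<in> C} =
      {C \<in> {C \<in> Bal (Suc n). Suc n \<in> C}. card C \<le> Suc a \<and> card (dset C) = k}"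
      unfolding Q_def by blast
    also have "\<dots> = {C \<in> insert (Suc n) ` {C \<in> Bal n. 2 * card C < n}. card C \<le> Suc a \<and> card (dset C) = k}"
      by (simp only: Bal_Suc_in)
    also have "\<dots> = insert (Suc n) ` T"
    proof (intro set_eqI iffI)
      fix C assume "C \<in> {C \<in> insert (Suc n) ` {C \<in> Bal n. 2 * card C < n}. card C \<le> Suc a \<and> card (dset C) = k}"
      then obtain C' where "C' \<in> Bal n" "C = insert (Suc n) C'" "card C \<le> Suc a" "card (dset C) = k" by auto
      moreover have "card C = Suc (card C')" using \<open>C' \<in> Bal n\<close> \<open>C = _\<close> Bal_sub[of C' n]
        by (simp add: card_ins_Suc)
      ultimately show "C \<in> insert (Suc n) ` T" unfolding T_def by auto
    next
      fix C assume "C \<in> insert (Suc n) ` T"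
      then obtain C' where "C' \<in> Bal n" "C = insert (Suc n) C'" "card C' \<le> a" "card (dset C) = k"
        unfolding T_def by auto
      moreover have "card C = Suc (card C')" using \<open>C' \<in> Bal n\<close> \<open>C = _\<close> Bal_sub[of C' n]
        by (simp add: card_ins_Suc)
      ultimately show "C \<in> {C \<in> insert (Suc n) ` {C \<in> Bal n. 2 * card C < n}. card C \<le> Suc a \<and> card (dset C) = k}"
        using assms by auto
    qed
    finally show ?thesis .
  qed
  then have "PD (Suc n) (Suc a) k = sum W (insert (Suc n) ` T)" by (simp add: PD_def)
  also have "\<dots> = sum (W \<circ> insert (Suc n)) T"
  proof (rule sum.reindex)
    show "inj_on (insert (Suc n)) T"
    proof (rule inj_onI)
      fix x y assume xy: "x \<in> T" "y \<in> T" "insert (Suc n) x = insert (Suc n) y"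
      have "x \<subseteq> {1..n}" "y \<subseteq> {1..n}" using xy(1,2) Bal_sub unfolding T_def by auto
      then have "Suc n \<notin> x" "Suc n \<notin> y" by auto
      then show "x = y" using xy(3) insert_ident[of "Suc n" x y] by blast
    qed
  qed
  also have "\<dots> = sum (W \<circ> insert (Suc n)) {C \<in> T. n \<in> C} + sum (W \<circ> insert (Suc n)) {C \<in> T. n \<notin> C}"
  proof -
    have e1: "T \<inter> {C. n \<in> C} = {C \<in> T. n \<in> C}" and e2: "T - {C. n \<in> C} = {C \<in> T. n \<notin> C}" by auto
    show ?thesis by (subst sum.Int_Diff[OF fT, of _ "{C. n \<in> C}"]) (simp only: e1 e2)
  qed
  also have "sum (W \<circ> insert (Suc n)) {C \<in> T. n \<in> C} = PD n a k"
  proof -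
    have i: "dset (insert (Suc n) C) = dset C" if "C \<in> Bal n" "n \<in> C" for C
      using dset_insert2[OF Bal_sub[OF that(1)] that(2)] .
    have s: "{C \<in> T. n \<in> C} = {C \<in> Q n a k. n \<in> C}"
      unfolding T_def Q_def using i by auto
    have w: "\<And>C. C \<in> {C \<in> Q n a k. n \<in> C} \<Longrightarrow> (W \<circ> insert (Suc n)) C = W C"
      unfolding Q_def using i by (auto simp: W_def)
    show ?thesis unfolding PD_def s by (rule sum.cong) (use w in auto)
  qed
  also have "sum (W \<circ> insert (Suc n)) {C \<in> T. n \<notin> C} = (if k = 0 then 0 else monom 1 n * PU n a (k - 1))"
  proof -
    have ic: "card (dset (insert (Suc n) C)) = Suc (card (dset C))" if "C \<in> Bal n" "n \<notin> C" for C
    proof -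
      have C: "C \<subseteq> {1..n}" using Bal_sub[OF that(1)] .
      have "finite (dset C)" using dset_sub[OF C] finite_subset by blast
      then show ?thesis using dset_insert[OF C n1 that(2)] by simp
    qed
    show ?thesis
    proof (cases k)
      case 0
      have e: "{C \<in> T. n \<notin> C} = {}" unfolding T_def using ic 0 by auto
      show ?thesis unfolding e using 0 by simp
    next
      case (Suc j)
      have s: "{C \<in> T. n \<notin> C} = {C \<in> Q n a j. n \<notin> C}"
        unfolding T_def Q_def using ic Suc by auto
      have w: "(W \<circ> insert (Suc n)) C = monom 1 n * W C" if "C \<in> {C \<in> Q n a j. n \<notin> C}" for C
      proof -
        have C: "C \<subseteq> {1..n}" "n \<notin> C" using that Bal_sub unfolding Q_def by auto
        have "finite (dset C)" using dset_sub[OF C(1)] finite_subset by blast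
        then have "\<Sum> (dset (insert (Suc n) C)) = n + \<Sum> (dset C)"
          using dset_insert[OF C(1) n1 C(2)] by simp
        then show ?thesis by (simp add: W_def mult_monom)
      qed
      have "sum (W \<circ> insert (Suc n)) {C \<in> T. n \<notin> C} = sum (\<lambda>C. monom 1 n * W C) {C \<in> Q n a j. n \<notin> C}"
        unfolding s by (rule sum.cong) (use w in auto)
      then show ?thesis using Suc unfolding PU_def by (simp add: sum_distrib_left)
    qed
  qed
  finally show ?thesis .
qed

lemma Bal_0: "Bal 0 = {{}}"
  by (auto simp: Bal_def bal_def)

lemma Pf_reduce:
  assumes "2 * a = Suc n" shows "Pf n a k = Pf n (a - 1) k"
proof -
  have "Q n a k = Q n (a - 1) k"
    unfolding Q_def using Bal_card assms by fastforce
  then show ?thesis by (simp add: Pf_def)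
qed

lemma hat_zero: "hat 0 b k = (if k = 0 then 1 else 0)"
  by (cases k) (auto simp: hat_def)

lemma Pf_closed: "2 * a \<le> n \<Longrightarrow> Pf n a k = hat a (n - a) k"
proof (induction n arbitrary: a k rule: less_induct)
  case (less n)
  show ?case
  proof (cases n)
    case 0
    then have "a = 0" using less.prems by simp
    have "Q 0 0 k = (if k = 0 then {{}} else {})"
      by (auto simp: Q_def Bal_0 dset_def)
    then show ?thesis using 0 \<open>a = 0\<close> by (simp add: Pf_def W_def dset_def hat_zero)
  next
    case (Suc m)
    have PU: "PU (Suc m) a k = hat a (m - a) k"
    proof (cases "2 * a \<le> m")
      case True
      then show ?thesis using less.IH[of m a k] Suc by (simp add: PU_Suc)
    next
      case False
      then have e: "2 * a = Suc m" using less.prems Suc by simp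
      then have "PU (Suc m) a k = Pf m (a - 1) k" by (simp add: PU_Suc Pf_reduce)
      also have "\<dots> = hat (a - 1) (m - (a - 1)) k" using less.IH[of m "a - 1" k] Suc e by simp
      also have "\<dots> = hat a (m - a) k"
      proof -
        have e1: "m - (a - 1) = a" and e2: "m - a = a - 1" using e by arith+
        show ?thesis unfolding e1 e2 by (rule hat_comm)
      qed
      finally show ?thesis .
    qed
    have PD: "PD (Suc m) a k = hat a (Suc m - a) k - hat a (m - a) k"
    proof (cases a)
      case 0
      then show ?thesis by (simp add: PD_0 hat_zero)
    next
      case (Suc a')
      then have lt: "2 * a' < m" using less.prems \<open>n = Suc m\<close> by simp
      then obtain m'' where m'': "m = Suc m''" by (cases m) auto
      define b where "b = m'' - a'"
      have mb: "m = Suc (a' + b)" using lt m'' b_def by simp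
      have PUm: "PU m a' j = hat a' b j" for j
        using less.IH[of m'' a' j] lt m'' \<open>n = Suc m\<close> by (simp add: PU_Suc b_def)
      have PDm: "PD m a' k = hat a' (Suc b) k - hat a' b k"
        using Pf_split[of m a' k] PUm[of k] less.IH[of m a' k] lt \<open>n = Suc m\<close> mb by simp
      have "PD (Suc m) a k = hat a' (Suc b) k - hat a' b k + (if k = 0 then 0 else monom 1 m * hat a' b (k - 1))"
        using PD_Suc[OF lt] Suc PDm PUm by simp
      also have "\<dots> = hat (Suc a') (Suc b) k - hat (Suc a') b k"
      proof -
        define I where "I = (if k = 0 then 0 else monom 1 m * hat a' b (k - 1))"
        have hk: "hat (Suc a') b k + hat a' (Suc b) k - hat a' b k + I = hat (Suc a') (Suc b) k"
          unfolding I_def mb by (rule hat_key)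
        then have "hat a' (Suc b) k - hat a' b k + I = hat (Suc a') (Suc b) k - hat (Suc a') b k"
          by (simp add: algebra_simps)
        then show ?thesis by (simp add: I_def)
      qed
      finally show ?thesis using Suc mb by simp
    qed
    show ?thesis using Pf_split[of "Suc m" a k] PU PD Suc by simp
  qed
qed



definition avS :: "nat set \<Rightarrow> (nat \<Rightarrow> nat) \<Rightarrow> bool" where
  "avS S p \<longleftrightarrow> \<not> (\<exists>i\<in>S. \<exists>j\<in>S. \<exists>k\<in>S. i < j \<and> j < k \<and> p j < p i \<and> p k < p j)"

definition invS :: "nat set \<Rightarrow> (nat \<Rightarrow> nat) \<Rightarrow> bool" where
  "invS S p \<longleftrightarrow> (\<forall>x. p (p x) = x) \<and> (\<forall>x. x \<notin> S \<longrightarrow> p x = x) \<and> avS S p"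

definition cl :: "nat set \<Rightarrow> (nat \<Rightarrow> nat) \<Rightarrow> nat set" where
  "cl S p = {i\<in>S. p i < i}"

lemma invS_inv: "invS S p \<Longrightarrow> p (p x) = x" by (simp add: invS_def)
lemma invS_out: "invS S p \<Longrightarrow> x \<notin> S \<Longrightarrow> p x = x" by (simp add: invS_def)
lemma invS_in: "invS S p \<Longrightarrow> x \<in> S \<Longrightarrow> p x \<in> S"
  by (metis invS_def)
lemma invS_av: "invS S p \<Longrightarrow> i \<in> S \<Longrightarrow> j \<in> S \<Longrightarrow> k \<in> S \<Longrightarrow> i < j \<Longrightarrow> j < k \<Longrightarrow> p j < p i \<Longrightarrow> p k < p j \<Longrightarrow> False"
  unfolding invS_def avS_def by blast
lemma invS_inj: "invS S p \<Longrightarrow> p x = p y \<Longrightarrow> x = y"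
  by (metis invS_inv)

lemma bal_cl: assumes "finite S" "invS S p" shows "bal S (cl S p)"
proof -
  let ?C = "cl S p"
  have "card (?C \<inter> {..t}) \<le> card ((S - ?C) \<inter> {..t})" for t
  proof -
    have "p ` (?C \<inter> {..t}) \<subseteq> (S - ?C) \<inter> {..t}"
    proof
      fix y assume "y \<in> p ` (?C \<inter> {..t})"
      then obtain c where c: "c \<in> S" "p c < c" "c \<le> t" "y = p c" by (auto simp: cl_def)
      have "p y = c" using c assms(2) invS_inv by blast
      then show "y \<in> (S - ?C) \<inter> {..t}" using c invS_in[OF assms(2)] by (auto simp: cl_def)
    qed
    moreover have "inj_on p (?C \<inter> {..t})" using invS_inj[OF assms(2)] by (meson inj_onI)
    ultimately show ?thesis using assms(1)
      by (metis (no_types, lifting) card_image card_mono finite_Diff finite_Int)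
  qed
  then show ?thesis by (auto simp: bal_def cl_def)
qed

lemma max_cl:
  assumes S: "finite S" and p: "invS S p" and n: "n = Max S" and nC: "n \<in> cl S p"
  shows "p n = Max (S - cl S p)"
proof -
  define m0 where "m0 = p n"
  have nS: "n \<in> S" using nC by (simp add: cl_def)
  have m0n: "m0 < n" using nC by (simp add: cl_def m0_def)
  have pm0: "p m0 = n" using invS_inv[OF p] m0_def by simp
  have m0S: "m0 \<in> S" using invS_in[OF p nS] m0_def by simp
  have m0C: "m0 \<in> S - cl S p" using m0S pm0 m0n by (auto simp: cl_def)
  have le: "x \<le> m0" if x: "x \<in> S - cl S p" for x
  proof (rule ccontr)
    assume "\<not> x \<le> m0"
    then have xm: "m0 < x" by simp
    have "x \<le> n" using x S n by auto
    moreover have "x \<noteq> n" using x nC by auto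
    ultimately have xn: "x < n" by simp
    have px: "x \<le> p x" using x by (auto simp: cl_def)
    have xS: "x \<in> S" using x by simp
    show False
    proof (cases "p x = x")
      case True
      show False using invS_av[OF p m0S xS nS xm xn] True pm0 m0_def xm xn by simp
    next
      case False
      then have xl: "x < p x" using px by simp
      have "p x \<noteq> n" using pm0 invS_inj[OF p] xm by (metis less_irrefl m0_def invS_inv[OF p])
      moreover have "p x \<le> n" using invS_in[OF p xS] S n by auto
      ultimately have "p x < n" by simp
      then show False using invS_av[OF p m0S xS invS_in[OF p xS] xm xl] pm0 invS_inv[OF p, of x] xl
        by simp
    qed
  qed
  show ?thesis unfolding m0_def[symmetric]
    by (rule Max_eqI[symmetric]) (use S m0C le in auto)
qed

lemma invS_del1:
  assumes "invS S p" "p n = n" shows "invS (S - {n}) p"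
  using assms unfolding invS_def avS_def by auto

lemma invS_del2:
  assumes p: "invS S p" and "p n = m" "m \<noteq> n"
  shows "invS (S - {m, n}) (p(m := m, n := n))"
proof -
  have pm: "p m = n" using assms invS_inv by blast
  let ?q = "p(m := m, n := n)"
  have "?q (?q x) = x" for x
  proof (cases "x = m \<or> x = n")
    case True then show ?thesis using assms by auto
  next
    case False
    then have "p x \<noteq> m" "p x \<noteq> n" using assms pm invS_inj[OF p] by metis+
    then show ?thesis using False invS_inv[OF p] by simp
  qed
  moreover have "?q x = x" if "x \<notin> S - {m, n}" for x
    using that invS_out[OF p] by auto
  moreover have "avS (S - {m, n}) ?q"
    unfolding avS_def using invS_av[OF p] by auto
  ultimately show ?thesis by (simp add: invS_def)
qed

lemma invS_empty: "invS {} p \<Longrightarrow> p = id"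
  by (auto simp: invS_def)

lemma cl_inj:
  "finite S \<Longrightarrow> invS S p \<Longrightarrow> invS S p' \<Longrightarrow> cl S p = cl S p' \<Longrightarrow> p = p'"
proof (induction "card S" arbitrary: S p p' rule: less_induct)
  case less
  show ?case
  proof (cases "S = {}")
    case True
    then show ?thesis using less.prems invS_empty by auto
  next
    case False
    define n where "n = Max S"
    have nS: "n \<in> S" using False less.prems(1) n_def by simp
    have nmax: "x \<le> n" if "x \<in> S" for x using that less.prems(1) n_def by simp
    show ?thesis
    proof (cases "n \<in> cl S p")
      case False
      have "p n = n" using False nS invS_in[OF less.prems(2) nS] nmax by (force simp: cl_def)
      moreover have "p' n = n" using False less.prems(4) nS invS_in[OF less.prems(3) nS] nmax by (force simp: cl_def)
      moreover have "cl (S - {n}) q = cl S q" if "q n = n" for q using that by (auto simp: cl_def)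
      moreover have "card (S - {n}) < card S" using nS less.prems(1) by (meson card_Diff1_less)
      ultimately show ?thesis
        using less.hyps[of "S - {n}" p p'] invS_del1[OF less.prems(2)] invS_del1[OF less.prems(3)] less.prems
        by simp
    next
      case True
      define m where "m = p n"
      have m': "m = p' n" using max_cl[OF less.prems(1,2) n_def True] max_cl[OF less.prems(1,3) n_def] True less.prems(4)
        m_def by simp
      have mn: "m \<noteq> n" using True m_def by (simp add: cl_def)
      have mS: "m \<in> S" using m_def invS_in[OF less.prems(2) nS] by simp
      have i1: "invS (S - {m, n}) (p(m := m, n := n))" using invS_del2[OF less.prems(2) m_def[symmetric] mn] .
      have i2: "invS (S - {m, n}) (p'(m := m, n := n))" using invS_del2[OF less.prems(3) m'[symmetric] mn] .
      have "cl (S - {m, n}) (p(m := m, n := n)) = cl (S - {m, n}) (p'(m := m, n := n))"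
        using less.prems(4) unfolding cl_def by auto
      moreover have "card (S - {m, n}) < card S" using nS mS less.prems(1)
        by (metis Diff_insert2 card_Diff1_less finite_Diff insertCI Diff_iff mn card_Diff1_le le_less_trans)
      ultimately have e: "p(m := m, n := n) = p'(m := m, n := n)"
        using less.hyps[of "S - {m, n}"] i1 i2 less.prems(1) by simp
      show ?thesis
      proof
        fix x
        show "p x = p' x"
        proof (cases "x = m \<or> x = n")
          case True
          then show ?thesis using m_def m' invS_inv[OF less.prems(2)] invS_inv[OF less.prems(3)] by metis
        next
          case False
          then show ?thesis using fun_cong[OF e, of x] by simp
        qed
      qed
    qed
  qed
qed



lemma bal_del_notin:
  assumes S: "finite S" and b: "bal S C" and n: "n = Max S" "S \<noteq> {}" and nC: "n \<notin> C"
  shows "bal (S - {n}) C"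
proof (cases "n = 0")
  case True
  then have "S \<subseteq> {0}" using S n by (auto dest: Max_ge[OF S])
  then have "C = {}" using b nC n True by (auto simp: bal_def)
  then show ?thesis by (simp add: bal_def)
next
  case False
  have CS: "C \<subseteq> S - {n}" using b nC by (auto simp: bal_def)
  have bt: "\<And>t. card (C \<inter> {..t}) \<le> card ((S - C) \<inter> {..t})" using b by (simp add: bal_def)
  have "card (C \<inter> {..t}) \<le> card ((S - {n} - C) \<inter> {..t})" for t
  proof (cases "t < n")
    case True
    then have "(S - {n} - C) \<inter> {..t} = (S - C) \<inter> {..t}" by auto
    then show ?thesis using bt[of t] by simp
  next
    case False
    have ltn: "x < n" if "x \<in> S - {n}" for x using that Max_ge[OF S, of x] n by auto
    have "C \<inter> {..t} = C \<inter> {..n - 1}" using CS ltn False by fastforce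
    moreover have "(S - {n} - C) \<inter> {..t} = (S - C) \<inter> {..n - 1}"
      using ltn False \<open>n \<noteq> 0\<close> by fastforce
    ultimately show ?thesis using bt[of "n - 1"] by simp
  qed
  then show ?thesis using CS by (simp add: bal_def)
qed

lemma bal_del_in:
  assumes S: "finite S" and b: "bal S C" and n: "n = Max S" "S \<noteq> {}" and nC: "n \<in> C"
    and m: "m = Max (S - C)" and ne: "S - C \<noteq> {}"
  shows "bal (S - {m, n}) (C - {n})"
proof -
  have CS: "C \<subseteq> S" using b by (simp add: bal_def)
  have mSC: "m \<in> S - C" using Max_in[of "S - C"] m ne S by simp
  have mmax: "x \<le> m" if "x \<in> S - C" for x using that m S by simp
  have bt: "\<And>t. card (C \<inter> {..t}) \<le> card ((S - C) \<inter> {..t})" using b by (simp add: bal_def)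
  have fC: "finite C" using CS S finite_subset by blast
  have cardle: "card C \<le> card (S - C)"
  proof -
    have "C \<inter> {..n} = C" "(S - C) \<inter> {..n} = S - C" using CS S n by (auto dest: Max_ge)
    then show ?thesis using bt[of n] by simp
  qed
  have eq: "S - {m, n} - (C - {n}) = (S - C) - {m}" using nC by auto
  have "card ((C - {n}) \<inter> {..t}) \<le> card ((S - {m, n} - (C - {n})) \<inter> {..t})" for t
  proof (cases "t < m")
    case True
    have "m < n" using mSC nC n S by (metis Diff_iff Max_ge le_neq_implies_less)
    then have "(C - {n}) \<inter> {..t} = C \<inter> {..t}" "(S - {m, n} - (C - {n})) \<inter> {..t} = (S - C) \<inter> {..t}"
      using True by auto
    then show ?thesis using bt[of t] by simp
  next
    case False
    have "(S - {m, n} - (C - {n})) \<inter> {..t} = (S - C) - {m}" unfolding eq using False mmax by fastforce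
    then have "card ((S - {m, n} - (C - {n})) \<inter> {..t}) = card (S - C) - 1"
      using mSC S by simp
    moreover have "card ((C - {n}) \<inter> {..t}) \<le> card C - 1"
    proof -
      have "card ((C - {n}) \<inter> {..t}) \<le> card (C - {n})" by (rule card_mono) (use fC in auto)
      then show ?thesis using nC fC by simp
    qed
    ultimately show ?thesis using cardle by simp
  qed
  then show ?thesis using CS mSC by (auto simp: bal_def)
qed

lemma cl_surj: "finite S \<Longrightarrow> bal S C \<Longrightarrow> \<exists>p. invS S p \<and> cl S p = C"
proof (induction "card S" arbitrary: S C rule: less_induct)
  case less
  note S = less.prems(1) and b = less.prems(2)
  have CS: "C \<subseteq> S" using b by (simp add: bal_def)
  show ?case
  proof (cases "S = {}")
    case True
    then have "C = {}" using CS by auto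
    moreover have "invS {} id" by (simp add: invS_def avS_def)
    ultimately show ?thesis using True by (auto simp: cl_def)
  next
    case False
    define n where "n = Max S"
    have nS: "n \<in> S" using False S n_def by simp
    have nmax: "x \<le> n" if "x \<in> S" for x using that S n_def by simp
    show ?thesis
    proof (cases "n \<in> C")
      case False
      have b': "bal (S - {n}) C" using bal_del_notin[OF S b n_def \<open>S \<noteq> {}\<close> False] .
      have "card (S - {n}) < card S" using nS S by (meson card_Diff1_less)
      then obtain p where p: "invS (S - {n}) p" "cl (S - {n}) p = C" using less.hyps[of "S - {n}" C] b' S by auto
      have pn: "p n = n" using invS_out[OF p(1)] by simp
      have "invS S p"
      proof -
        have "avS S p"
        proof (unfold avS_def, rule notI)
          assume "\<exists>i\<in>S. \<exists>j\<in>S. \<exists>k\<in>S. i < j \<and> j < k \<and> p j < p i \<and> p k < p j"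
          then obtain i j k where ijk: "i \<in> S" "j \<in> S" "k \<in> S" "i < j" "j < k" "p j < p i" "p k < p j" by blast
          show False
          proof (cases "k = n")
            case True
            have "j \<in> S - {n}" using ijk True by auto
            then have "p j \<in> S - {n}" using invS_in[OF p(1)] by blast
            then show False using ijk True pn nmax by fastforce
          next
            case False
            then have "k \<in> S - {n}" "j \<in> S - {n}" "i \<in> S - {n}" using ijk nmax by (auto dest: nmax)
            then show False using invS_av[OF p(1)] ijk by blast
          qed
        qed
        then show ?thesis using p(1) by (auto simp: invS_def)
      qed
      moreover have "cl S p = C" using p(2) pn by (auto simp: cl_def)
      ultimately show ?thesis by blast
    next
      case True
      have ne: "S - C \<noteq> {}"
      proof
        assume "S - C = {}"
        then have "S = C" using CS by auto
        moreover have "card (C \<inter> {..n}) \<le> card ((S - C) \<inter> {..n})" using b by (simp add: bal_def)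
        moreover have "C \<inter> {..n} = C" using CS nmax by auto
        moreover have "card C > 0" using True S CS finite_subset card_gt_0_iff by blast
        ultimately show False by simp
      qed
      define m where "m = Max (S - C)"
      have mSC: "m \<in> S - C" using Max_in[of "S - C"] m_def ne S by simp
      have mmax: "x \<le> m" if "x \<in> S - C" for x using that m_def S by simp
      have mn: "m < n" using mSC True nmax by (metis Diff_iff le_neq_implies_less)
      have gtm: "x \<in> C" if "x \<in> S" "m < x" for x using that mmax[of x] by (cases "x \<in> C") auto
      define S' where "S' = S - {m, n}"
      define C' where "C' = C - {n}"
      have b': "bal S' C'" unfolding S'_def C'_def using bal_del_in[OF S b n_def \<open>S \<noteq> {}\<close> True m_def ne] .
      have "card S' < card S"
      proof -
        have "card S' \<le> card (S - {n})" unfolding S'_def by (rule card_mono) (use S in auto)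
        also have "\<dots> < card S" using nS S by (meson card_Diff1_less)
        finally show ?thesis .
      qed
      then obtain p0 where p0: "invS S' p0" "cl S' p0 = C'" using less.hyps[of S' C'] b' S S'_def by auto
      have p0m: "p0 m = m" and p0n: "p0 n = n" using invS_out[OF p0(1)] S'_def by auto
      define p where "p = p0(m := n, n := m)"
      have pS': "p x = p0 x" if "x \<in> S'" for x using that unfolding p_def S'_def by auto
      have p0S': "p0 x \<in> S'" if "x \<in> S'" for x using invS_in[OF p0(1) that] .
      have mS: "m \<in> S" using mSC by simp
      have S'S: "x \<in> S" if "x \<in> S'" for x using that S'_def by simp
      have clos: "p0 x < x" if "x \<in> S'" "m < x" for x
      proof -
        have "x \<in> C'" using that gtm S'_def C'_def by auto
        then show ?thesis using p0(2) that by (auto simp: cl_def)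
      qed
      have inv: "p (p x) = x" for x
      proof (cases "x = m \<or> x = n")
        case True then show ?thesis using mn by (auto simp: p_def)
      next
        case False
        then have "p0 x \<noteq> m" "p0 x \<noteq> n" using p0m p0n invS_inv[OF p0(1), of x] by auto
        then show ?thesis using False invS_inv[OF p0(1)] by (simp add: p_def)
      qed
      have out: "p x = x" if "x \<notin> S" for x
        using that mS nS invS_out[OF p0(1)] S'_def by (auto simp: p_def)
      have av: "avS S p"
      proof (unfold avS_def, rule notI)
        assume "\<exists>i\<in>S. \<exists>j\<in>S. \<exists>k\<in>S. i < j \<and> j < k \<and> p j < p i \<and> p k < p j"
        then obtain i j k where ijk: "i \<in> S" "j \<in> S" "k \<in> S" "i < j" "j < k" "p j < p i" "p k < p j" by blast
        have pn: "p n = m" and pm: "p m = n" using mn by (auto simp: p_def)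
        have ple: "p x \<le> n" if "x \<in> S" for x
        proof (cases "x \<in> S'")
          case True then show ?thesis using nmax[OF S'S[OF p0S'[OF True]]] pS'[OF True] by simp
        next
          case False then have "x = m \<or> x = n" using that S'_def by auto
          then show ?thesis using pn pm mn by auto
        qed
        have kn: "k \<noteq> n \<Longrightarrow> k \<noteq> m \<Longrightarrow> i \<noteq> m \<Longrightarrow> j \<noteq> m \<Longrightarrow> False"
        proof -
          assume a: "k \<noteq> n" "k \<noteq> m" "i \<noteq> m" "j \<noteq> m"
          then have iS: "i \<in> S'" "j \<in> S'" "k \<in> S'" using ijk nmax S'_def by (auto dest: nmax)
          have "p0 j < p0 i" "p0 k < p0 j" using ijk(6,7) pS'[OF iS(1)] pS'[OF iS(2)] pS'[OF iS(3)] by simp_all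
          then show False using invS_av[OF p0(1) iS ijk(4,5)] by simp
        qed
        show False
        proof (cases "k = n")
          case True
          have "j \<noteq> m" using ijk pm ple[OF ijk(1)] by auto
          then have jS': "j \<in> S'" using ijk True S'_def by auto
          have "m < p0 j" using ijk(7) True pn pS'[OF jS'] by simp
          have "j < m"
          proof (rule ccontr)
            assume "\<not> j < m"
            then have "m < j" using \<open>j \<noteq> m\<close> by simp
            then have "p0 j < j" using clos jS' by simp
            moreover have "p0 (p0 j) < p0 j" using clos[OF p0S'[OF jS'] \<open>m < p0 j\<close>] .
            ultimately show False using invS_inv[OF p0(1)] by simp
          qed
          then have iS': "i \<in> S'" using ijk mn S'_def by auto
          have "j < p0 j" using \<open>j < m\<close> \<open>m < p0 j\<close> by simp
          then show False using invS_av[OF p0(1) iS' jS' p0S'[OF jS']] ijk pS'[OF iS'] pS'[OF jS']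
              invS_inv[OF p0(1), of j] by simp
        next
          case kn': False
          show False
          proof (cases "k = m")
            case True
            then have "n < p j" using ijk pm by simp
            then show False using ple[OF ijk(2)] by simp
          next
            case km: False
            show False
            proof (cases "j = m")
              case True
              then show False using ijk pm ple[OF ijk(1)] by simp
            next
              case jm: False
              show False
              proof (cases "i = m")
                case False then show False using kn kn' km jm by blast
              next
                case True
                have jS': "j \<in> S'" "k \<in> S'" using ijk True jm km kn' nmax S'_def by (auto dest: nmax)
                have "m < j" "m < k" using ijk True by auto
                then have cj: "p0 j < j" and ck: "p0 k < k" using clos jS' by auto
                have "p0 k < p0 j" using ijk pS' jS' by simp
                show False
                  using invS_av[OF p0(1) p0S'[OF jS'(2)] p0S'[OF jS'(1)] jS'(1) \<open>p0 k < p0 j\<close> cj]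
                    invS_inv[OF p0(1), of j] invS_inv[OF p0(1), of k] ijk cj by simp
              qed
            qed
          qed
        qed
      qed
      have "invS S p" using inv out av by (simp add: invS_def)
      moreover have "cl S p = C"
      proof (intro set_eqI iffI)
        fix x assume x: "x \<in> cl S p"
        show "x \<in> C"
        proof (cases "x \<in> S'")
          case True
          then have "x \<in> cl S' p0" using x pS' by (auto simp: cl_def)
          then show ?thesis using p0(2) C'_def by auto
        next
          case False
          then have "x = m \<or> x = n" using x S'_def by (auto simp: cl_def)
          then show ?thesis using x True mn by (auto simp: cl_def p_def)
        qed
      next
        fix x assume x: "x \<in> C"
        show "x \<in> cl S p"
        proof (cases "x \<in> S'")
          case True
          then have "x \<in> C'" using x C'_def S'_def by auto
          then have "x \<in> cl S' p0" using p0(2) by simp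
          then show ?thesis using True pS' S'S by (auto simp: cl_def)
        next
          case False
          then have "x = n" using x CS S'_def mSC by auto
          then show ?thesis using nS mn by (auto simp: cl_def p_def)
        qed
      qed
      ultimately show ?thesis by blast
    qed
  qed
qed



lemma inv321_eq: "inv321 n = {p. invS {1..n} p}"
proof (intro set_eqI iffI)
  fix p assume "p \<in> inv321 n"
  then have a: "p permutes {1..n}" "p \<circ> p = id" "avoids321 n p" by (auto simp: inv321_def involution_def)
  have "p (p x) = x" for x using fun_cong[OF a(2), of x] by simp
  moreover have "p x = x" if "x \<notin> {1..n}" for x using permutes_not_in[OF a(1) that] .
  moreover have "avS {1..n} p" using a(3) unfolding avS_def avoids321_def by auto
  ultimately show "p \<in> {p. invS {1..n} p}" by (simp add: invS_def)
next
  fix p assume "p \<in> {p. invS {1..n} p}"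
  then have p: "invS {1..n} p" by simp
  have "p permutes {1..n}"
    unfolding permutes_def
  proof (intro conjI allI impI)
    fix x assume "x \<notin> {1..n}" then show "p x = x" using invS_out[OF p] by blast
  next
    fix y show "\<exists>!x. p x = y"
      using invS_inv[OF p] by metis
  qed
  moreover have "p \<circ> p = id" using invS_inv[OF p] by (auto simp: fun_eq_iff)
  moreover have "avoids321 n p" using p unfolding invS_def avS_def avoids321_def by fastforce
  ultimately show "p \<in> inv321 n" by (simp add: inv321_def involution_def)
qed

lemma fp_cl:
  assumes p: "invS {1..n} p"
  shows "fp n p = n - 2 * card (cl {1..n} p)"
proof -
  define S where "S = {1..n::nat}"
  define C where "C = cl S p"
  define Op where "Op = p ` C"
  define F where "F = {i \<in> S. p i = i}"
  have pS: "invS S p" using p S_def by simp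
  have CS: "C \<subseteq> S" by (auto simp: C_def cl_def)
  have OS: "Op \<subseteq> S" using invS_in[OF pS] CS by (auto simp: Op_def)
  have fS: "finite S" by (simp add: S_def)
  have cO: "card Op = card C" unfolding Op_def
    by (rule card_image) (meson inj_onI invS_inj[OF pS])
  have d1: "C \<inter> Op = {}"
  proof -
    { fix x assume "x \<in> C" "x \<in> Op"
      then obtain c where "c \<in> C" "x = p c" by (auto simp: Op_def)
      then have "p x = c" "x < c" using invS_inv[OF pS] by (auto simp: C_def cl_def)
      with \<open>x \<in> C\<close> have False by (auto simp: C_def cl_def) }
    then show ?thesis by blast
  qed
  have d2: "F \<inter> (C \<union> Op) = {}"
  proof -
    { fix x assume "x \<in> F" "x \<in> C \<union> Op"
      from \<open>x \<in> C \<union> Op\<close> have False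
      proof
        assume "x \<in> C" then show False using \<open>x \<in> F\<close> by (auto simp: C_def cl_def F_def)
      next
        assume "x \<in> Op"
        then obtain c where "c \<in> C" "x = p c" by (auto simp: Op_def)
        then have "p x = c" "x < c" using invS_inv[OF pS] by (auto simp: C_def cl_def)
        then show False using \<open>x \<in> F\<close> by (auto simp: F_def)
      qed }
    then show ?thesis by blast
  qed
  have cov: "S = F \<union> (C \<union> Op)"
  proof
    show "F \<union> (C \<union> Op) \<subseteq> S" using CS OS by (auto simp: F_def)
  next
    show "S \<subseteq> F \<union> (C \<union> Op)"
    proof
      fix x assume xS: "x \<in> S"
      show "x \<in> F \<union> (C \<union> Op)"
      proof (cases "p x = x")
        case True then show ?thesis using xS by (simp add: F_def)
      next
        case False
        show ?thesis
        proof (cases "p x < x")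
          case True then show ?thesis using xS by (simp add: C_def cl_def)
        next
          case False
          then have "x < p x" using \<open>p x \<noteq> x\<close> by simp
          moreover have "p x \<in> S" using invS_in[OF pS xS] .
          ultimately have "p x \<in> C" using invS_inv[OF pS, of x] by (simp add: C_def cl_def)
          then have "x \<in> Op" using invS_inv[OF pS, of x] unfolding Op_def by (metis image_eqI)
          then show ?thesis by simp
        qed
      qed
    qed
  qed
  have "card S = card F + (card C + card Op)"
  proof -
    have fF: "finite F" "finite C" "finite Op" using fS CS OS by (auto simp: F_def intro: finite_subset)
    have "card S = card F + card (C \<union> Op)" using cov d2 fF by (metis card_Un_disjoint finite_Un)
    also have "card (C \<union> Op) = card C + card Op" using d1 fF by (simp add: card_Un_disjoint)
    finally show ?thesis .
  qed
  then have "n = fp n p + 2 * card C" using cO unfolding S_def F_def fp_def by simp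
  then show ?thesis unfolding C_def S_def by simp
qed

lemma desc_cl:
  assumes p: "invS {1..n} p"
  shows "descents n p = dset (cl {1..n} p)"
proof (intro set_eqI iffI)
  fix i assume "i \<in> descents n p"
  then have i: "1 \<le> i" "i < n" "p (Suc i) < p i" by (auto simp: descents_def)
  have iS: "i \<in> {1..n}" and i1S: "Suc i \<in> {1..n}" using i by auto
  have pi: "i \<le> p i"
  proof (rule ccontr)
    assume "\<not> i \<le> p i"
    then have lt: "p i < i" by simp
    show False
      using invS_av[OF p invS_in[OF p i1S] invS_in[OF p iS] iS i(3) lt] invS_inv[OF p, of i]
        invS_inv[OF p, of "Suc i"] lt by simp
  qed
  have pi1: "p (Suc i) < Suc i"
  proof (rule ccontr)
    assume "\<not> p (Suc i) < Suc i"
    then have ge: "Suc i \<le> p (Suc i)" by simp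
    show False
    proof (cases "p (Suc i) = Suc i")
      case True
      have "Suc i < p i" using True i(3) by simp
      then show False
        using invS_av[OF p iS i1S invS_in[OF p iS]] True i(3) invS_inv[OF p, of i] by simp
    next
      case False
      then have "Suc i < p (Suc i)" using ge by simp
      then show False
        using invS_av[OF p iS i1S invS_in[OF p i1S]] i(3) invS_inv[OF p, of "Suc i"] by simp
    qed
  qed
  show "i \<in> dset (cl {1..n} p)" using i pi pi1 iS i1S by (auto simp: dset_def cl_def)
next
  fix i assume "i \<in> dset (cl {1..n} p)"
  then have i: "1 \<le> i" "\<not> (i \<in> {1..n} \<and> p i < i)" "Suc i \<in> {1..n}" "p (Suc i) < Suc i"
    by (auto simp: dset_def cl_def)
  then have "i \<le> p i" "p (Suc i) \<le> i" by auto
  moreover have "p (Suc i) \<noteq> p i" using invS_inj[OF p] by fastforce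
  ultimately have "p (Suc i) < p i" by simp
  then show "i \<in> descents n p" using i by (auto simp: descents_def)
qed

lemma bij_cl: "bij_betw (cl {1..n}) (inv321 n) (Bal n)"
  unfolding bij_betw_def
proof
  show "inj_on (cl {1..n}) (inv321 n)"
    by (rule inj_onI) (use cl_inj[of "{1..n}"] in \<open>auto simp: inv321_eq\<close>)
  show "cl {1..n} ` inv321 n = Bal n"
  proof
    show "cl {1..n} ` inv321 n \<subseteq> Bal n" using bal_cl[of "{1..n}"] by (auto simp: inv321_eq Bal_def)
    show "Bal n \<subseteq> cl {1..n} ` inv321 n"
    proof
      fix C assume "C \<in> Bal n"
      then obtain p where "invS {1..n} p" "cl {1..n} p = C" using cl_surj[of "{1..n}" C] by (auto simp: Bal_def)
      then show "C \<in> cl {1..n} ` inv321 n" by (auto simp: inv321_eq)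
    qed
  qed
qed

lemma transfer:
  fixes R :: "nat \<Rightarrow> nat \<Rightarrow> bool"
  shows "(\<Sum>p \<in> {p \<in> inv321 n. R (fp n p) (des n p)}. monom (1::int) (maj n p))
       = (\<Sum>C \<in> {C \<in> Bal n. R (n - 2 * card C) (card (dset C))}. W C)"
proof -
  define G where "G C = R (n - 2 * card C) (card (dset C))" for C
  have st: "fp n p = n - 2 * card (cl {1..n} p)" "des n p = card (dset (cl {1..n} p))"
    "maj n p = \<Sum> (dset (cl {1..n} p))" if "p \<in> inv321 n" for p
    using fp_cl desc_cl that by (auto simp: inv321_eq des_def maj_def)
  have A: "{p \<in> inv321 n. R (fp n p) (des n p)} = {p \<in> inv321 n. G (cl {1..n} p)}"
    using st by (auto simp: G_def)
  have B: "bij_betw (cl {1..n}) {p \<in> inv321 n. G (cl {1..n} p)} {C \<in> Bal n. G C}"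
  proof -
    have inj: "inj_on (cl {1..n}) (inv321 n)" and img: "cl {1..n} ` inv321 n = Bal n"
      using bij_cl[of n] unfolding bij_betw_def by auto
    have "inj_on (cl {1..n}) {p \<in> inv321 n. G (cl {1..n} p)}" using inj by (rule inj_on_subset) auto
    moreover have "cl {1..n} ` {p \<in> inv321 n. G (cl {1..n} p)} = {C \<in> Bal n. G C}"
    proof
      show "cl {1..n} ` {p \<in> inv321 n. G (cl {1..n} p)} \<subseteq> {C \<in> Bal n. G C}" using img by auto
    next
      show "{C \<in> Bal n. G C} \<subseteq> cl {1..n} ` {p \<in> inv321 n. G (cl {1..n} p)}"
      proof
        fix C assume "C \<in> {C \<in> Bal n. G C}"
        then have "C \<in> cl {1..n} ` inv321 n" "G C" using img by auto
        then obtain p where "p \<in> inv321 n" "C = cl {1..n} p" by auto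
        then show "C \<in> cl {1..n} ` {p \<in> inv321 n. G (cl {1..n} p)}" using \<open>G C\<close> by auto
      qed
    qed
    ultimately show ?thesis by (simp add: bij_betw_def)
  qed
  have "(\<Sum>p \<in> {p \<in> inv321 n. R (fp n p) (des n p)}. monom (1::int) (maj n p))
      = (\<Sum>p \<in> {p \<in> inv321 n. G (cl {1..n} p)}. W (cl {1..n} p))"
    unfolding A by (rule sum.cong) (auto simp: st W_def)
  also have "\<dots> = (\<Sum>C \<in> {C \<in> Bal n. G C}. W C)"
    by (rule sum.reindex_bij_betw[OF B])
  finally show ?thesis by (simp add: G_def)
qed

theorem mainTheorem14:
  shows "(\<forall>a b k :: nat. a \<le> b \<longrightarrow>
            (\<Sum>p \<in> {p \<in> inv321 (a + b). fp (a + b) p \<ge> b - a \<and> des (a + b) p = k}.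
                monom (1::int) (maj (a + b) p))
            = monom 1 (k^2) * qbin a k * qbin b k)
       \<and> (\<forall>n l k :: nat. l \<le> n \<longrightarrow> l mod 2 = n mod 2 \<longrightarrow>
            (\<Sum>p \<in> {p \<in> inv321 n. fp n p = l \<and> des n p = k}.
                monom (1::int) (maj n p))
            = monom 1 (k^2) *
              (qbinz (int ((n - l) div 2)) k * qbinz (int ((n + l) div 2)) k
               - qbinz (int ((n - l) div 2) - 1) k * qbinz (int ((n + l) div 2) + 1) k))"
proof (intro conjI allI impI)
  fix a b k :: nat assume ab: "a \<le> b"
  have "(\<Sum>p \<in> {p \<in> inv321 (a + b). fp (a + b) p \<ge> b - a \<and> des (a + b) p = k}. monom (1::int) (maj (a + b) p))
      = (\<Sum>C \<in> {C \<in> Bal (a + b). a + b - 2 * card C \<ge> b - a \<and> card (dset C) = k}. W C)"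
    by (rule transfer[where R = "\<lambda>f d. f \<ge> b - a \<and> d = k"])
  also have "{C \<in> Bal (a + b). a + b - 2 * card C \<ge> b - a \<and> card (dset C) = k} = Q (a + b) a k"
    unfolding Q_def using Bal_card ab by fastforce
  also have "sum W (Q (a + b) a k) = hat a b k"
    using Pf_closed[of a "a + b" k] ab by (simp add: Pf_def)
  finally show "(\<Sum>p \<in> {p \<in> inv321 (a + b). fp (a + b) p \<ge> b - a \<and> des (a + b) p = k}. monom (1::int) (maj (a + b) p))
      = monom 1 (k^2) * qbin a k * qbin b k" by (simp add: hat_def)
next
  fix n l k :: nat assume ln: "l \<le> n" and par: "l mod 2 = n mod 2"
  define d where "d = (n - l) div 2"
  have d2: "2 * d = n - l" using ln par unfolding d_def by presburger
  have y: "(n + l) div 2 = n - d" using d2 ln by simp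
  have "(\<Sum>p \<in> {p \<in> inv321 n. fp n p = l \<and> des n p = k}. monom (1::int) (maj n p))
      = (\<Sum>C \<in> {C \<in> Bal n. n - 2 * card C = l \<and> card (dset C) = k}. W C)"
    by (rule transfer[where R = "\<lambda>f d. f = l \<and> d = k"])
  also have "{C \<in> Bal n. n - 2 * card C = l \<and> card (dset C) = k} = {C \<in> Bal n. card C = d \<and> card (dset C) = k}"
    using Bal_card d2 ln by fastforce
  finally have L: "(\<Sum>p \<in> {p \<in> inv321 n. fp n p = l \<and> des n p = k}. monom (1::int) (maj n p))
      = sum W {C \<in> Bal n. card C = d \<and> card (dset C) = k}" .
  show "(\<Sum>p \<in> {p \<in> inv321 n. fp n p = l \<and> des n p = k}. monom (1::int) (maj n p))
            = monom 1 (k^2) *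
              (qbinz (int ((n - l) div 2)) k * qbinz (int ((n + l) div 2)) k
               - qbinz (int ((n - l) div 2) - 1) k * qbinz (int ((n + l) div 2) + 1) k)"
  proof (cases "d = 0")
    case True
    have "{C \<in> Bal n. card C = d \<and> card (dset C) = k} = Q n 0 k" using True by (auto simp: Q_def)
    then have "sum W {C \<in> Bal n. card C = d \<and> card (dset C) = k} = hat 0 n k"
      using Pf_closed[of 0 n k] by (simp add: Pf_def)
    then show ?thesis unfolding L d_def[symmetric] y using True by (simp add: hat_def qbinz_def)
  next
    case False
    have sub: "Q n (d - 1) k \<subseteq> Q n d k" by (auto simp: Q_def)
    have "{C \<in> Bal n. card C = d \<and> card (dset C) = k} = Q n d k - Q n (d - 1) k"
      using False by (auto simp: Q_def)
    then have "sum W {C \<in> Bal n. card C = d \<and> card (dset C) = k} = Pf n d k - Pf n (d - 1) k"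
      using sum_diff[OF finite_Q sub] by (simp add: Pf_def)
    also have "\<dots> = hat d (n - d) k - hat (d - 1) (n - (d - 1)) k"
      using Pf_closed[of d n k] Pf_closed[of "d - 1" n k] d2 by simp
    finally have R: "sum W {C \<in> Bal n. card C = d \<and> card (dset C) = k} = hat d (n - d) k - hat (d - 1) (n - (d - 1)) k" .
    have e1: "int d - 1 = int (d - 1)" using False by simp
    have e2: "int (n - d) + 1 = int (n - (d - 1))" using False d2 ln by simp
    show ?thesis unfolding L d_def[symmetric] y e1 e2 R
      by (simp add: hat_def qbinz_def algebra_simps)
  qed
qed


end
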